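(* Let $k\ge1$ and let $M^*$ be constructed from quadrature rules $Q_i^k$ as in the context (with $Q_i^k$ exact on $\mathbb P^{k-1}(I_i)$). Then the bilinear form $(v,\omega)\mapsto (v,M^*\omega)$ is an inner product on $\mathbb V^k$ if and only if for every cell $I_i$ both of the following hold: (1) $R_i^k(v)=0$ for all $v\in\mathbb P^{2k-1}(I_i)$; (2) $\frac{h_i}{2k-1}-Q_i^k(L_{i,k+1}L_{i,k-1})>0$.
   Context: Let $\Omega=[a,b]$ be partitioned into finitely many cells $I_i=[x_{i-\frac12},x_{i+\frac12}]$ with sizes $h_i=x_{i+\frac12}-x_{i-\frac12}$. $(\cdot,\cdot)$ is the $L^2(\Omega)$ inner product and $(\cdot,\cdot)_{I_i}$ the $L^2(I_i)$ inner product. $\mathbb V^k=\{v\in L^2(\Omega): v|_{I_i}\in\mathbb P^k(I_i)\ \forall i\}$. Each $I_i$ has subdivision points $x_{i-\frac12}=x_{i,0}<x_{i,1}<\dots<x_{i,k}<x_{i,k+1}=x_{i+\frac12}$ and control volumes $I_{i,j}=[x_{i,j},x_{i,j+1}]$, $j=0,\dots,k$; $\mathbb V^{k,*}$ is the space of functions constant on each $I_{i,j}$. On each $I_i$ a quadrature $Q_i^k(v)=\sum_{j=0}^{k+1}A_{i,j}v(x_{i,j})$ is given, with error $R_i^k(v)=\int_{I_i}v\,dx-Q_i^k(v)$, and it is assumed that $R_i^k(v)=0$ for all $v\in\mathbb P^{k-1}(I_i)$. The operator $M^*:\mathbb V^k\to\mathbb V^{k,*}$ is defined cellwise: for $v=\omega|_{I_i}$,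 $(M^*\omega)|_{I_{i,0}}=v(x_{i-\frac12})+A_{i,0}v'(x_{i-\frac12})$ and $(M^*\omega)|_{I_{i,j}}-(M^*\omega)|_{I_{i,j-1}}=A_{i,j}v'(x_{i,j})$, $j=1,\dots,k$ (values and derivatives at endpoints taken from inside $I_i$). $L_{i,\ell}$ denotes the shifted Legendre polynomial of degree $\ell$ on $I_i$ (the Legendre polynomial $P_\ell$ composed with the affine map of $I_i$ onto $[-1,1]$), so that $L_{i,\ell}(x_{i+\frac12})=1$ and $(L_{i,\ell},L_{i,m})_{I_i}=\delta_{\ell m}\,h_i/(2\ell+1)$. *)

theory Defs
  imports "HOL-Analysis.Analysis" "HOL-Computational_Algebra.Polynomial"
begin

(* Cells I_i = [x i, x (Suc i)], i < N.  Subdivision points of I_i: s i j, j = 0..k+1.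
   Quadrature weights of Q_i^k: A i j, j = 0..k+1.
   An element of V^k is represented by its cellwise polynomials v i (i < N),
   with v i = 0 for i >= N as a normalisation. *)

definition Qrule :: "nat \<Rightarrow> (nat \<Rightarrow> real) \<Rightarrow> (nat \<Rightarrow> real) \<Rightarrow> (real \<Rightarrow> real) \<Rightarrow> real" where
  "Qrule k s A f = (\<Sum>j\<le>k+1. A j * f (s j))"

definition Rerr :: "real \<Rightarrow> real \<Rightarrow> nat \<Rightarrow> (nat \<Rightarrow> real) \<Rightarrow> (nat \<Rightarrow> real) \<Rightarrow> (real \<Rightarrow> real) \<Rightarrow> real" where
  "Rerr a b k s A f = integral {a..b} f - Qrule k s A f"

(* value of M^* omega on the control volume I_{i,j}, where p = omega restricted to I_i:
   c_0 = p(x_{i,0}) + A_0 p'(x_{i,0}),  c_j = c_{j-1} + A_j p'(x_{i,j}) *)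
definition Mstar_coef :: "(nat \<Rightarrow> real) \<Rightarrow> (nat \<Rightarrow> real) \<Rightarrow> real poly \<Rightarrow> nat \<Rightarrow> real" where
  "Mstar_coef s A p j = poly p (s 0) + (\<Sum>l\<le>j. A l * poly (pderiv p) (s l))"

definition bform :: "nat \<Rightarrow> nat \<Rightarrow> (nat \<Rightarrow> nat \<Rightarrow> real) \<Rightarrow> (nat \<Rightarrow> nat \<Rightarrow> real)
    \<Rightarrow> (nat \<Rightarrow> real poly) \<Rightarrow> (nat \<Rightarrow> real poly) \<Rightarrow> real" where
  "bform N k s A v w = (\<Sum>i<N. \<Sum>j\<le>k.
      Mstar_coef (s i) (A i) (w i) j * integral {s i j..s i (Suc j)} (poly (v i)))"

definition Vk :: "nat \<Rightarrow> nat \<Rightarrow> (nat \<Rightarrow> real poly) set" where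
  "Vk N k = {v. (\<forall>i<N. degree (v i) \<le> k) \<and> (\<forall>i\<ge>N. v i = 0)}"

definition is_inner_product :: "(nat \<Rightarrow> real poly) set \<Rightarrow> ((nat \<Rightarrow> real poly) \<Rightarrow> (nat \<Rightarrow> real poly) \<Rightarrow> real) \<Rightarrow> bool" where
  "is_inner_product V B \<longleftrightarrow>
     (\<forall>u\<in>V. \<forall>v\<in>V. \<forall>w\<in>V. \<forall>c::real.
        B (\<lambda>i. smult c (u i) + v i) w = c * B u w + B v w \<and>
        B w (\<lambda>i. smult c (u i) + v i) = c * B w u + B w v) \<and>
     (\<forall>v\<in>V. \<forall>w\<in>V. B v w = B w v) \<and>
     (\<forall>v\<in>V. v \<noteq> (\<lambda>i. 0) \<longrightarrow> B v v > 0)"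

fun legendre :: "nat \<Rightarrow> real poly" where
  "legendre 0 = 1"
| "legendre (Suc 0) = [:0, 1:]"
| "legendre (Suc (Suc n)) =
     smult (1 / (real n + 2)) (smult (2 * real n + 3) ([:0, 1:] * legendre (Suc n)) - smult (real n + 1) (legendre n))"

definition shifted_legendre :: "real \<Rightarrow> real \<Rightarrow> nat \<Rightarrow> real poly" where
  "shifted_legendre a b l = pcompose (legendre l) [: -(a + b) / (b - a), 2 / (b - a) :]"

end

theory Submission
  imports Defs
begin


lemma poly_integrable[simp]: "poly p integrable_on {a..b::real}"
  by (intro integrable_continuous_interval continuous_intros)

lemma int_pderiv:
  fixes P :: "real poly"
  assumes "a \<le> b"
  shows "integral {a..b} (poly (pderiv P)) = poly P b - poly P a"
proof -
  have "(poly (pderiv P) has_integral (poly P b - poly P a)) {a..b}"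
    by (intro fundamental_theorem_of_calculus assms)
       (auto intro!: DERIV_subset[OF poly_DERIV] simp: has_real_derivative_iff_has_vector_derivative[symmetric])
  then show ?thesis by (rule integral_unique)
qed

lemma pderiv_sum': "pderiv (\<Sum>i\<in>I. f i) = (\<Sum>i\<in>I. pderiv (f i))"
  by (induction I rule: infinite_finite_induct) (auto simp: pderiv_add)

lemma antideriv_ex: "\<exists>V::real poly. pderiv V = q"
proof -
  let ?V = "\<Sum>i\<le>degree q. monom (coeff q i / (1 + real i)) (Suc i)"
  have "pderiv ?V = (\<Sum>i\<le>degree q. monom (coeff q i) i)"
    by (simp add: pderiv_sum' pderiv_monom)
  also have "\<dots> = q" by (rule poly_as_sum_of_monoms)
  finally show ?thesis by blast
qed

lemma int_add: "integral {a..b::real} (poly (p + q)) = integral {a..b} (poly p) + integral {a..b} (poly q)"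
proof -
  have "poly (p + q) = (\<lambda>x. poly p x + poly q x)" by auto
  then show ?thesis by (simp add: integral_add)
qed
lemma int_smult: "integral {a..b::real} (poly (smult c p)) = c * integral {a..b} (poly p)"
proof -
  have "poly (smult c p) = (\<lambda>x. c * poly p x)" by auto
  then show ?thesis by simp
qed
lemma int_diff: "integral {a..b::real} (poly (p - q)) = integral {a..b} (poly p) - integral {a..b} (poly q)"
proof -
  have "poly (p - q) = (\<lambda>x. poly p x - poly q x)" by auto
  then show ?thesis by (simp add: integral_diff)
qed
lemma int_zero: "integral {a..b::real} (poly 0) = 0"
proof -
  have "poly 0 = (\<lambda>x::real. 0)" by auto
  then show ?thesis by simp
qed

lemma Rerr_add: "Rerr a b k s A (poly (p + q)) = Rerr a b k s A (poly p) + Rerr a b k s A (poly q)"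
  by (simp add: Rerr_def Qrule_def int_add sum.distrib algebra_simps)
lemma Rerr_smult: "Rerr a b k s A (poly (smult c p)) = c * Rerr a b k s A (poly p)"
  by (simp add: Rerr_def Qrule_def int_smult sum_distrib_left algebra_simps)
lemma Rerr_diff: "Rerr a b k s A (poly (p - q)) = Rerr a b k s A (poly p) - Rerr a b k s A (poly q)"
  by (simp add: Rerr_def Qrule_def int_diff sum_subtractf algebra_simps)
lemma Rerr_zero: "Rerr a b k s A (poly 0) = 0"
  by (simp add: Rerr_def Qrule_def int_zero)



lemma leg_deg: "degree (legendre n) \<le> n \<and> coeff (legendre n) n \<noteq> 0"
proof (induction n rule: legendre.induct)
  case 1 then show ?case by simp
next
  case 2 then show ?case by simp
next
  case (3 n)
  let ?P = "smult (2 * real n + 3) ([:0, 1:] * legendre (Suc n)) - smult (real n + 1) (legendre n)"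
  have d1: "degree (smult (2 * real n + 3) ([:0, 1:] * legendre (Suc n))) \<le> Suc (Suc n)"
    using 3 by (simp add: degree_pCons_eq_if)
  have d2: "degree (smult (real n + 1) (legendre n)) \<le> Suc (Suc n)"
    using 3 by (meson degree_smult_le le_SucI order_trans)
  have "degree ?P \<le> Suc (Suc n)"
    using d1 d2 degree_diff_le by blast
  moreover have "coeff (legendre n) (Suc (Suc n)) = 0"
    using 3 by (intro coeff_eq_0) auto
  ultimately show ?case using 3
    by (auto simp: degree_smult_le intro: order_trans[OF degree_smult_le])
qed

lemma leg_one: "poly (legendre n) 1 = 1"
  by (induction n rule: legendre.induct) (auto simp: field_simps)

lemma leg_mone: "poly (legendre n) (-1) = (-1) ^ n"
  by (induction n rule: legendre.induct) (auto simp: field_simps)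

lemma leg_rec_pt: "poly (legendre (Suc (Suc n))) x =
   ((2 * real n + 3) * x * poly (legendre (Suc n)) x - (real n + 1) * poly (legendre n) x) / (real n + 2)"
  by (simp add: field_simps)

lemma leg_drec_pt: "poly (pderiv (legendre (Suc (Suc n)))) x =
   ((2 * real n + 3) * (poly (legendre (Suc n)) x + x * poly (pderiv (legendre (Suc n))) x)
     - (real n + 1) * poly (pderiv (legendre n)) x) / (real n + 2)"
  by (simp add: pderiv_smult pderiv_diff pderiv_mult pderiv_pCons field_simps)

lemma leg_C:
  "(\<forall>x. x * poly (pderiv (legendre n)) x - poly (pderiv (legendre (n - 1))) x = real n * poly (legendre n) x
      \<and> poly (pderiv (legendre (Suc n))) x = (2 * real n + 1) * poly (legendre n) x + poly (pderiv (legendre (n - 1))) x)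
   \<and> (\<forall>x. x * poly (pderiv (legendre (Suc n))) x - poly (pderiv (legendre n)) x = real (Suc n) * poly (legendre (Suc n)) x
      \<and> poly (pderiv (legendre (Suc (Suc n)))) x = (2 * real (Suc n) + 1) * poly (legendre (Suc n)) x + poly (pderiv (legendre n)) x)"
proof (induction n)
  case 0
  show ?case by (simp add: pderiv_smult pderiv_diff pderiv_mult pderiv_pCons field_simps)
next
  case (Suc n)
  show ?case
  proof (intro conjI allI)
    fix x
    show "x * poly (pderiv (legendre (Suc n))) x - poly (pderiv (legendre (Suc n - 1))) x = real (Suc n) * poly (legendre (Suc n)) x"
      using Suc.IH unfolding diff_Suc_1 by blast
    show "poly (pderiv (legendre (Suc (Suc n)))) x = (2 * real (Suc n) + 1) * poly (legendre (Suc n)) x + poly (pderiv (legendre (Suc n - 1))) x"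
      using Suc.IH unfolding diff_Suc_1 by blast
    have A0: "x * poly (pderiv (legendre n)) x - poly (pderiv (legendre (n - 1))) x = real n * poly (legendre n) x"
      using Suc.IH by blast
    then have A: "x * poly (pderiv (legendre n)) x = real n * poly (legendre n) x + poly (pderiv (legendre (n - 1))) x"
      by (simp add: algebra_simps)
    have B: "poly (pderiv (legendre (Suc n))) x = (2 * real n + 1) * poly (legendre n) x + poly (pderiv (legendre (n - 1))) x"
      using Suc.IH by blast
    have C: "poly (pderiv (legendre (Suc (Suc n)))) x = (2 * real (Suc n) + 1) * poly (legendre (Suc n)) x + poly (pderiv (legendre n)) x"
      using Suc.IH by blast
    show ii: "x * poly (pderiv (legendre (Suc (Suc n)))) x - poly (pderiv (legendre (Suc n))) x = real (Suc (Suc n)) * poly (legendre (Suc (Suc n))) x"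
      unfolding C leg_rec_pt[of n x] using A B by (simp add: field_simps del: legendre.simps)
    have "poly (pderiv (legendre (Suc (Suc (Suc n))))) x =
       ((2 * real (Suc n) + 3) * (poly (legendre (Suc (Suc n))) x + x * poly (pderiv (legendre (Suc (Suc n)))) x)
         - (real (Suc n) + 1) * poly (pderiv (legendre (Suc n))) x) / (real (Suc n) + 2)"
      by (rule leg_drec_pt)
    also have "\<dots> = (2 * real (Suc (Suc n)) + 1) * poly (legendre (Suc (Suc n))) x + poly (pderiv (legendre (Suc n))) x"
      using ii by (simp add: field_simps del: legendre.simps)
    finally show "poly (pderiv (legendre (Suc (Suc (Suc n))))) x = (2 * real (Suc (Suc n)) + 1) * poly (legendre (Suc (Suc n))) x + poly (pderiv (legendre (Suc n))) x" .
  qed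
qed

lemma leg_F4: "pderiv (legendre (Suc n)) = smult (2 * real n + 1) (legendre n) + pderiv (legendre (n - 1))"
  using leg_C[of n] by (intro poly_ext) simp



lemma int_parts:
  fixes p W :: "real poly"
  assumes "a \<le> b"
  shows "integral {a..b} (poly (p * pderiv W)) = poly p b * poly W b - poly p a * poly W a - integral {a..b} (poly (W * pderiv p))"
proof -
  have "integral {a..b} (poly (pderiv (p * W))) = poly (p * W) b - poly (p * W) a"
    by (rule int_pderiv[OF assms])
  then show ?thesis by (simp add: pderiv_mult int_add)
qed

lemma ar1: "(h::real) \<noteq> 0 \<Longrightarrow> -(a+b)/h + x*(2/h) = (2*x-(a+b))/h"
  by (simp add: field_simps)
lemma ar2a: "(h::real) \<noteq> 0 \<Longrightarrow> c \<noteq> 0 \<Longrightarrow> h/(2*c)*(2/h*c) = 1"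
  by (simp add: field_simps)
lemma ar2: "(h::real) \<noteq> 0 \<Longrightarrow> (n::real) \<ge> 0 \<Longrightarrow> h/(2*(2*n+1))*(2/h*(2*n+1)) = 1"
  by (rule ar2a) auto
lemma ar3a: "(h::real) \<noteq> 0 \<Longrightarrow> c1 \<noteq> 0 \<Longrightarrow> c2 \<noteq> 0 \<Longrightarrow>
  - (h / (2 * c2) * (2 / h * c1) * (0 - h / c1) + h / (2 * c2) * (0 - 0)) = h / c2"
  by (simp add: field_simps)
lemma ar3: "(h::real) \<noteq> 0 \<Longrightarrow> (m::real) \<ge> 0 \<Longrightarrow>
  - (h / (2 * (2 * (m + 1) + 1)) * (2 / h * (2 * m + 1)) * (0 - h / (2 * m + 1)) + h / (2 * (2 * (m + 1) + 1)) * (0 - 0))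
  = h / (2 * (m + 1) + 1)"
  by (rule ar3a) auto

locale cellI =
  fixes a b :: real
  assumes ab: "a < b"
begin

definition "phi = [: -(a + b) / (b - a), 2 / (b - a) :]"
abbreviation "SL n \<equiv> shifted_legendre a b n"

lemma SL_def': "SL n = pcompose (legendre n) phi"
  by (simp add: shifted_legendre_def phi_def)

lemma ba: "b - a \<noteq> 0" using ab by simp
lemma phi_pt: "poly phi x = (2 * x - (a + b)) / (b - a)"
  using ar1[OF ba] by (simp add: phi_def)
lemma phi_b: "poly phi b = 1" using ba by (simp add: phi_pt)
lemma phi_a: "poly phi a = -1" using ba by (simp add: phi_pt field_simps)
lemma deg_phi: "degree phi = 1" using ab by (simp add: phi_def)

lemma SL_b: "poly (SL n) b = 1" by (simp add: SL_def' poly_pcompose phi_b leg_one)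
lemma SL_a: "poly (SL n) a = (-1) ^ n" by (simp add: SL_def' poly_pcompose phi_a leg_mone)

lemma SL_deg: "degree (SL n) = n"
  using leg_deg[of n] by (simp add: SL_def' degree_pcompose deg_phi)
    (metis le_antisym le_degree)

lemma SL_lead: "coeff (SL n) n \<noteq> 0"
proof -
  have "SL n \<noteq> 0"
  proof
    assume "SL n = 0"
    then have "poly (SL n) b = 0" by simp
    with SL_b[of n] show False by simp
  qed
  then show ?thesis using SL_deg[of n] by (metis leading_coeff_0_iff)
qed

lemma SL0: "SL 0 = 1" by (simp add: SL_def' pcompose_1)

lemma SL_F4: "pderiv (SL (Suc n)) = smult (2 / (b - a) * (2 * real n + 1)) (SL n) + pderiv (SL (n - 1))"
proof -
  have pp: "pderiv phi = [: 2 / (b - a) :]" by (simp add: phi_def pderiv_pCons)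
  show ?thesis
    unfolding SL_def' pderiv_pcompose leg_F4 pp
    by (simp add: pcompose_add pcompose_smult algebra_simps)
qed

definition "W n = smult ((b - a) / (2 * (2 * real n + 1))) (SL (Suc n) - SL (n - 1))"

lemma W_deriv: "n \<ge> 1 \<Longrightarrow> pderiv (W n) = SL n"
proof -
  assume "n \<ge> 1"
  then obtain m where m: "n = Suc m" by (cases n) auto
  have "pderiv (W n) = smult ((b - a) / (2 * (2 * real n + 1)) * (2 / (b - a) * (2 * real n + 1))) (SL n)"
    unfolding m W_def pderiv_smult pderiv_diff SL_F4 by (simp add: smult_add_right)
  also have "(b - a) / (2 * (2 * real n + 1)) * (2 / (b - a) * (2 * real n + 1)) = 1"
    using ar2[OF ba, of "real n"] by simp
  finally show ?thesis by simp
qed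

lemma W_b: "poly (W n) b = 0" by (simp add: W_def SL_b)
lemma W_a: "n \<ge> 1 \<Longrightarrow> poly (W n) a = 0"
  by (cases n) (simp_all add: W_def SL_a)

lemma SL_orth_aux: "degree q \<le> d \<Longrightarrow> d < n \<Longrightarrow> integral {a..b} (poly (SL n * q)) = 0"
proof (induction d arbitrary: n q)
  case 0
  have n1: "n \<ge> 1" using 0 by simp
  have "integral {a..b} (poly (SL n * q)) = integral {a..b} (poly (q * pderiv (W n)))"
    using W_deriv[OF n1] by (simp add: mult.commute)
  also have "\<dots> = - integral {a..b} (poly (W n * pderiv q))"
    using int_parts[of a b q "W n"] ab W_a[OF n1] W_b by simp
  also have "pderiv q = 0" using 0 by (simp add: pderiv_eq_0_iff)
  finally show ?case by (simp add: int_zero)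
next
  case (Suc d)
  have n1: "n \<ge> 1" using Suc by simp
  have dq: "degree (pderiv q) \<le> d" using Suc.prems by (simp add: degree_pderiv)
  have "integral {a..b} (poly (SL n * q)) = integral {a..b} (poly (q * pderiv (W n)))"
    using W_deriv[OF n1] by (simp add: mult.commute)
  also have "\<dots> = - integral {a..b} (poly (W n * pderiv q))"
    using int_parts[of a b q "W n"] ab W_a[OF n1] W_b by simp
  also have "W n * pderiv q = smult ((b - a) / (2 * (2 * real n + 1))) (SL (Suc n) * pderiv q - SL (n - 1) * pderiv q)"
    by (simp add: W_def algebra_simps)
  also have "integral {a..b} (poly \<dots>) = 0"
  proof -
    have i1: "integral {a..b} (poly (SL (Suc n) * pderiv q)) = 0"
      by (rule Suc.IH[OF dq]) (use Suc.prems in simp)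
    have i2: "integral {a..b} (poly (SL (n - 1) * pderiv q)) = 0"
      by (rule Suc.IH[OF dq]) (use Suc.prems in simp)
    show ?thesis by (simp only: int_smult int_diff i1 i2) simp
  qed
  finally show ?case by simp
qed

lemma SL_orth: "degree q < n \<or> q = 0 \<Longrightarrow> integral {a..b} (poly (SL n * q)) = 0"
  using SL_orth_aux[of q "degree q" n] by (auto simp: int_zero)

lemma SL_norm: "integral {a..b} (poly (SL n * SL n)) = (b - a) / (2 * real n + 1)"
proof (induction n)
  case 0
  then show ?case using ab by (simp add: SL0)
next
  case (Suc m)
  let ?n = "Suc m"
  have "integral {a..b} (poly (SL ?n * SL ?n)) = integral {a..b} (poly (SL ?n * pderiv (W ?n)))"
    using W_deriv[of ?n] by simp
  also have "\<dots> = - integral {a..b} (poly (W ?n * pderiv (SL ?n)))"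
    using int_parts[of a b "SL ?n" "W ?n"] ab W_a[of ?n] W_b by simp
  also have "W ?n * pderiv (SL ?n) = smult ((b - a) / (2 * (2 * real ?n + 1)) * (2 / (b - a) * (2 * real m + 1)))
        (SL (Suc ?n) * SL m - SL m * SL m)
       + smult ((b - a) / (2 * (2 * real ?n + 1))) (SL (Suc ?n) * pderiv (SL (m - 1)) - SL m * pderiv (SL (m - 1)))"
    unfolding W_def SL_F4 by (intro poly_ext) (simp add: algebra_simps)
  also have "integral {a..b} (poly \<dots>) = (b - a) / (2 * (2 * real ?n + 1)) * (2 / (b - a) * (2 * real m + 1)) *
      (0 - (b - a) / (2 * real m + 1)) + (b - a) / (2 * (2 * real ?n + 1)) * (0 - 0)"
  proof -
    have o1: "integral {a..b} (poly (SL (Suc ?n) * SL m)) = 0"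
      by (rule SL_orth) (simp add: SL_deg)
    have dd: "degree (pderiv (SL (m - 1))) < m \<or> pderiv (SL (m - 1)) = 0"
      by (cases "degree (SL (m - 1)) = 0") (auto simp: pderiv_eq_0_iff degree_pderiv SL_deg)
    have o2: "integral {a..b} (poly (SL (Suc ?n) * pderiv (SL (m - 1)))) = 0"
      by (rule SL_orth) (use dd in auto)
    have o3: "integral {a..b} (poly (SL m * pderiv (SL (m - 1)))) = 0"
      by (rule SL_orth) (use dd in auto)
    show ?thesis by (simp only: int_smult int_diff int_add o1 o2 o3 Suc.IH)
  qed
  also have "- ((b - a) / (2 * (2 * real ?n + 1)) * (2 / (b - a) * (2 * real m + 1)) *
      (0 - (b - a) / (2 * real m + 1)) + (b - a) / (2 * (2 * real ?n + 1)) * (0 - 0))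
      = (b - a) / (2 * real ?n + 1)"
    using ar3[OF ba, of "real m"] by simp
  finally show ?case .
qed

end



definition cfm :: "nat \<Rightarrow> (nat \<Rightarrow> real) \<Rightarrow> (nat \<Rightarrow> real) \<Rightarrow> real poly \<Rightarrow> real poly \<Rightarrow> real" where
  "cfm k s A v w = (\<Sum>j\<le>k. Mstar_coef s A w j * integral {s j..s (Suc j)} (poly v))"

lemma bform_cfm: "bform N k s A v w = (\<Sum>i<N. cfm k (s i) (A i) (v i) (w i))"
  by (simp add: bform_def cfm_def)

lemma Mstar_lin: "Mstar_coef s A (smult c u + v) j = c * Mstar_coef s A u j + Mstar_coef s A v j"
  by (simp add: Mstar_coef_def pderiv_add pderiv_smult sum.distrib sum_distrib_left algebra_simps)

lemma cfm_lin1: "cfm k s A (smult c u + v) w = c * cfm k s A u w + cfm k s A v w"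
  by (simp add: cfm_def int_add int_smult sum.distrib sum_distrib_left algebra_simps)

lemma cfm_lin2: "cfm k s A w (smult c u + v) = c * cfm k s A w u + cfm k s A w v"
  unfolding cfm_def Mstar_lin by (simp add: sum.distrib sum_distrib_left algebra_simps)

lemma cfm_zero1: "cfm k s A 0 w = 0"
  by (simp add: cfm_def int_zero)

lemma sum_parts:
  fixes c :: real
  shows "(\<Sum>j\<le>k. (c + (\<Sum>l\<le>j. g l)) * (f (Suc j) - f j)) = c * (f (Suc k) - f 0) + (\<Sum>l\<le>Suc k. g l * (f (Suc k) - f l))"
proof (induction k)
  case 0 then show ?case by (simp add: algebra_simps)
next
  case (Suc k)
  have "(\<Sum>j\<le>Suc k. (c + (\<Sum>l\<le>j. g l)) * (f (Suc j) - f j))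
     = c * (f (Suc k) - f 0) + (\<Sum>l\<le>Suc k. g l * (f (Suc k) - f l))
       + (c + (\<Sum>l\<le>Suc k. g l)) * (f (Suc (Suc k)) - f (Suc k))"
    using Suc by simp
  also have "\<dots> = c * (f (Suc (Suc k)) - f 0) + (\<Sum>l\<le>Suc k. g l * (f (Suc (Suc k)) - f l))"
    by (simp add: algebra_simps sum_distrib_left sum_distrib_right sum.distrib[symmetric])
  also have "\<dots> = c * (f (Suc (Suc k)) - f 0) + (\<Sum>l\<le>Suc (Suc k). g l * (f (Suc (Suc k)) - f l))"
    by simp
  finally show ?case .
qed

lemma coeff_mult_le:
  fixes f g :: "real poly"
  assumes "degree f \<le> m" "degree g \<le> n"
  shows "coeff (f * g) (m + n) = coeff f m * coeff g n"
proof (cases "degree f = m \<and> degree g = n")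
  case True then show ?thesis using coeff_mult_degree_sum[of f g] by simp
next
  case False
  then have "degree f < m \<or> degree g < n" using assms by auto
  then have "coeff f m = 0 \<or> coeff g n = 0" by (auto intro: coeff_eq_0)
  moreover have "degree (f * g) < m + n" using \<open>degree f < m \<or> degree g < n\<close> assms degree_mult_le[of f g] by linarith
  ultimately show ?thesis by (auto intro: coeff_eq_0)
qed

lemma degree_drop:
  fixes p :: "real poly"
  assumes "degree p \<le> Suc n" "coeff p (Suc n) = 0"
  shows "degree p \<le> n"
proof (rule degree_le, intro allI impI)
  fix i assume "n < i"
  then show "coeff p i = 0" using assms
    by (cases "i = Suc n") (auto intro: coeff_eq_0)
qed

lemma Rerr_sum: "finite I \<Longrightarrow> Rerr a b k s A (poly (\<Sum>i\<in>I. f i)) = (\<Sum>i\<in>I. Rerr a b k s A (poly (f i)))"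
proof (induction I rule: finite_induct)
  case empty then show ?case using Rerr_zero by (simp del: poly_0)
next
  case (insert x F)
  have "Rerr a b k s A (poly (\<Sum>i\<in>insert x F. f i)) = Rerr a b k s A (poly (f x + (\<Sum>i\<in>F. f i)))"
    using insert by (simp del: poly_add)
  also have "\<dots> = Rerr a b k s A (poly (f x)) + Rerr a b k s A (poly (\<Sum>i\<in>F. f i))" by (rule Rerr_add)
  finally show ?case using insert by (simp del: poly_add)
qed

lemma int_sq_pos:
  fixes q :: "real poly"
  assumes "a < b" "q \<noteq> 0"
  shows "integral {a..b} (poly (q * q)) > 0"
proof -
  have cont: "continuous_on {a..b} (poly (q * q))" by (intro continuous_intros)
  have nn: "\<And>x. x \<in> {a..b} \<Longrightarrow> poly (q * q) x \<ge> 0" by simp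
  have ge: "integral {a..b} (poly (q * q)) \<ge> 0"
    by (rule integral_nonneg) (auto simp: nn)
  have "integral {a..b} (poly (q * q)) \<noteq> 0"
  proof
    assume "integral {a..b} (poly (q * q)) = 0"
    then have "\<forall>x\<in>{a..b}. poly (q * q) x = 0"
      using integral_eq_0_iff[OF cont assms(1) nn] by blast
    then have "{a..b} \<subseteq> {x. poly q x = 0}" by auto
    moreover have "finite {x. poly q x = 0}" by (rule poly_roots_finite[OF assms(2)])
    ultimately have "finite {a..b}" by (rule finite_subset)
    with infinite_Icc[OF assms(1)] show False by simp
  qed
  with ge show ?thesis by simp
qed

locale cellQ = cellI +
  fixes k :: nat and s A :: "nat \<Rightarrow> real"
  assumes k1: "k \<ge> 1" and s0: "s 0 = a" and sk: "s (k + 1) = b"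
    and smono: "\<forall>j\<le>k. s j < s (Suc j)"
begin

abbreviation "cf \<equiv> cfm k s A"
abbreviation "R p \<equiv> Rerr a b k s A (poly p)"

lemma keyK:
  assumes V: "pderiv V = v"
  shows "cf v w = integral {a..b} (poly (v * w)) - R (pderiv w * ([:poly V b:] - V))"
proof -
  let ?f = "\<lambda>j. poly V (s j)"
  let ?g = "\<lambda>l. A l * poly (pderiv w) (s l)"
  have "cf v w = (\<Sum>j\<le>k. (poly w a + (\<Sum>l\<le>j. ?g l)) * (?f (Suc j) - ?f j))"
    unfolding cfm_def Mstar_coef_def s0
    using smono by (intro sum.cong refl) (simp add: int_pderiv[symmetric] V less_imp_le)
  also have "\<dots> = poly w a * (?f (Suc k) - ?f 0) + (\<Sum>l\<le>Suc k. ?g l * (?f (Suc k) - ?f l))"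
    by (rule sum_parts)
  finally have L: "cf v w = poly w a * (poly V b - poly V a) + (\<Sum>l\<le>Suc k. A l * (poly (pderiv w) (s l) * (poly V b - poly V (s l))))"
    using sk s0 by (simp add: mult.assoc)
  have pd: "pderiv (w * (V - [:poly V b:])) = v * w - pderiv w * ([:poly V b:] - V)"
    by (simp add: pderiv_mult pderiv_diff pderiv_smult V algebra_simps)
  have "integral {a..b} (poly (v * w)) - integral {a..b} (poly (pderiv w * ([:poly V b:] - V)))
      = integral {a..b} (poly (pderiv (w * (V - [:poly V b:]))))"
    unfolding pd int_diff ..
  also have "\<dots> = poly w a * (poly V b - poly V a)"
    using ab by (simp add: int_pderiv algebra_simps)
  finally have I: "integral {a..b} (poly (v * w)) - integral {a..b} (poly (pderiv w * ([:poly V b:] - V))) = poly w a * (poly V b - poly V a)" .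
  show ?thesis
    unfolding L Rerr_def Qrule_def using I by (simp add: algebra_simps)
qed

definition anti :: "real poly \<Rightarrow> real poly" where "anti v = (SOME V. pderiv V = v)"
lemma anti: "pderiv (anti v) = v"
  unfolding anti_def using antideriv_ex by (rule someI_ex)

definition "Wv v = [:poly (anti v) b:] - anti v"

lemma keyK': "cf v w = integral {a..b} (poly (v * w)) - R (pderiv w * Wv v)"
  unfolding Wv_def by (rule keyK[OF anti])

lemma anti_deg: "degree v \<le> m \<Longrightarrow> degree (anti v) \<le> Suc m"
  using degree_pderiv[of "anti v"] anti[of v] by simp

lemma Wv_deg: "degree v \<le> m \<Longrightarrow> degree (Wv v) \<le> Suc m"
  unfolding Wv_def using anti_deg[of v m]
  by (metis degree_diff_le degree_pCons_0 le0 pCons_0_0 degree_0 order.trans le_SucI degree_pCons_eq_if)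

lemma Wv_coeff: "coeff (Wv v) (Suc m) = - coeff v m / (real m + 1)"
proof -
  have "coeff v m = real (Suc m) * coeff (anti v) (Suc m)"
    using coeff_pderiv[of "anti v" m] anti[of v] by simp
  then show ?thesis unfolding Wv_def by (simp add: field_simps)
qed

end



lemma ar_LLa: "(h::real) \<noteq> 0 \<Longrightarrow> c \<noteq> 0 \<Longrightarrow> e \<noteq> 0 \<Longrightarrow>
   h / c - (h / (2 * c) * (2 / h * e)) * Q = e / c * (h / e - Q)"
  by (simp add: field_simps)
lemma ar_LL: "(h::real) \<noteq> 0 \<Longrightarrow> K \<ge> 1 \<Longrightarrow>
   h / (2 * K + 1) - (h / (2 * (2 * K + 1)) * (2 / h * (2 * (K - 1) + 1))) * Q
   = (2 * K - 1) / (2 * K + 1) * (h / (2 * K - 1) - Q)"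
proof -
  assume "h \<noteq> 0" "K \<ge> 1"
  moreover have "2 * (K - 1) + 1 = 2 * K - 1" by simp
  ultimately show ?thesis using ar_LLa[of h "2 * K + 1" "2 * K - 1" Q] by simp
qed

lemma ar_ne: "(m::nat) \<noteq> n \<Longrightarrow> real n / (real m + 1) \<noteq> real m / (real n + 1)"
proof
  assume mn: "m \<noteq> n" and eq: "real n / (real m + 1) = real m / (real n + 1)"
  then have "real n * (real n + 1) = real m * (real m + 1)"
    by (simp add: field_simps)
  then have "n * (n + 1) = m * (m + 1)" by (metis of_nat_1 of_nat_add of_nat_eq_iff of_nat_mult)
  moreover have "m < n \<Longrightarrow> m * (m + 1) < n * (n + 1)" by (intro mult_strict_mono) auto
  moreover have "n < m \<Longrightarrow> n * (n + 1) < m * (m + 1)" by (intro mult_strict_mono) auto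
  ultimately show False using mn by (metis less_irrefl nat_neq_iff)
qed

context cellQ
begin

definition "Ex2 \<longleftrightarrow> (\<forall>p. degree p \<le> 2 * k - 1 \<longrightarrow> R p = 0)"

lemma Ex2D: "Ex2 \<Longrightarrow> degree p \<le> 2 * k - 1 \<Longrightarrow> R p = 0"
  unfolding Ex2_def by blast

lemma cf_sym:
  assumes ex: Ex2 and dv: "degree v \<le> k" and dw: "degree w \<le> k"
  shows "cf v w = cf w v"
proof -
  let ?D = "pderiv v * Wv w - pderiv w * Wv v"
  have dpv: "degree (pderiv v) \<le> k - 1" using dv by (simp add: degree_pderiv)
  have dpw: "degree (pderiv w) \<le> k - 1" using dw by (simp add: degree_pderiv)
  have dWv: "degree (Wv v) \<le> Suc k" by (rule Wv_deg[OF dv])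
  have dWw: "degree (Wv w) \<le> Suc k" by (rule Wv_deg[OF dw])
  have kk: "(k - 1) + Suc k = Suc (2 * k - 1)" using k1 by simp
  have d1: "degree (pderiv v * Wv w) \<le> (k - 1) + Suc k"
    using degree_mult_le[of "pderiv v" "Wv w"] dpv dWw by linarith
  have d2: "degree (pderiv w * Wv v) \<le> (k - 1) + Suc k"
    using degree_mult_le[of "pderiv w" "Wv v"] dpw dWv by linarith
  have dD: "degree ?D \<le> Suc (2 * k - 1)"
    using degree_diff_le[OF d1 d2] kk by simp
  have cpv: "coeff (pderiv v) (k - 1) = real k * coeff v k"
    using k1 by (simp add: coeff_pderiv)
  have cpw: "coeff (pderiv w) (k - 1) = real k * coeff w k"
    using k1 by (simp add: coeff_pderiv)
  have "coeff ?D ((k - 1) + Suc k) = coeff (pderiv v) (k - 1) * coeff (Wv w) (Suc k) - coeff (pderiv w) (k - 1) * coeff (Wv v) (Suc k)"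
    by (simp only: coeff_diff coeff_mult_le[OF dpv dWw] coeff_mult_le[OF dpw dWv])
  also have "\<dots> = 0" unfolding cpv cpw Wv_coeff by simp
  finally have cD: "coeff ?D (Suc (2 * k - 1)) = 0" using kk by simp
  have "degree ?D \<le> 2 * k - 1" by (rule degree_drop[OF dD cD])
  then have RD: "R ?D = 0" by (rule Ex2D[OF ex])
  have "cf v w - cf w v = R (pderiv v * Wv w) - R (pderiv w * Wv v)"
    unfolding keyK'[of v w] keyK'[of w v] by (simp add: mult.commute)
  also have "\<dots> = R ?D" by (rule Rerr_diff[symmetric])
  finally show ?thesis using RD by simp
qed

lemma cf_LL:
  assumes ex: Ex2
  shows "cf (SL k) (SL k) = (2 * real k - 1) / (2 * real k + 1) *
          ((b - a) / real (2 * k - 1) - Qrule k s A (poly (SL (k + 1) * SL (k - 1))))"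
proof -
  define c0 where "c0 = (b - a) / (2 * (2 * real k + 1))"
  define c1 where "c1 = 2 / (b - a) * (2 * real (k - 1) + 1)"
  let ?Q = "Qrule k s A (poly (SL (k + 1) * SL (k - 1)))"
  have Wd: "pderiv (W k) = SL k" by (rule W_deriv[OF k1])
  have Wb: "poly (W k) b = 0" by (rule W_b)
  have L': "pderiv (SL k) = smult c1 (SL (k - 1)) + pderiv (SL (k - 1 - 1))"
    using SL_F4[of "k - 1"] k1 by (simp add: c1_def)
  have prod: "pderiv (SL k) * ([:poly (W k) b:] - W k) =
     smult (-(c0 * c1)) (SL (k - 1) * SL (Suc k) - SL (k - 1) * SL (k - 1))
     + smult (- c0) (pderiv (SL (k - 1 - 1)) * (SL (Suc k) - SL (k - 1)))"
  proof -
    have Wc: "W k = smult c0 (SL (Suc k) - SL (k - 1))" by (simp add: W_def c0_def)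
    show ?thesis unfolding L' Wc by (intro poly_ext) (simp add: SL_b algebra_simps)
  qed
  have r1: "R (SL (k - 1) * SL (k - 1)) = 0"
  proof (rule Ex2D[OF ex])
    show "degree (SL (k - 1) * SL (k - 1)) \<le> 2 * k - 1"
      using degree_mult_le[of "SL (k - 1)" "SL (k - 1)"] SL_deg k1 by simp
  qed
  have r2: "R (pderiv (SL (k - 1 - 1)) * (SL (Suc k) - SL (k - 1))) = 0"
  proof (cases "degree (SL (k - 1 - 1)) = 0")
    case True
    then have "pderiv (SL (k - 1 - 1)) = 0" by (simp add: pderiv_eq_0_iff)
    then show ?thesis using Rerr_zero by simp
  next
    case False
    then have k3: "k \<ge> 3" using SL_deg[of "k - 1 - 1"] by simp
    have "degree (pderiv (SL (k - 1 - 1))) \<le> k - 3" by (simp add: degree_pderiv SL_deg)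
    moreover have "degree (SL (Suc k) - SL (k - 1)) \<le> Suc k"
      using degree_diff_le[of "SL (Suc k)" "Suc k" "SL (k - 1)"] SL_deg by simp
    ultimately have "degree (pderiv (SL (k - 1 - 1)) * (SL (Suc k) - SL (k - 1))) \<le> (k - 3) + Suc k"
      using degree_mult_le[of "pderiv (SL (k - 1 - 1))" "SL (Suc k) - SL (k - 1)"] by linarith
    also have "\<dots> \<le> 2 * k - 1" using k3 by simp
    finally show ?thesis by (rule Ex2D[OF ex])
  qed
  have r3: "R (SL (k - 1) * SL (Suc k)) = - ?Q"
  proof -
    have "integral {a..b} (poly (SL (Suc k) * SL (k - 1))) = 0"
      by (rule SL_orth, rule disjI1, unfold SL_deg, linarith)
    then show ?thesis unfolding Rerr_def by (simp add: mult.commute)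
  qed
  have "cf (SL k) (SL k) = integral {a..b} (poly (SL k * SL k)) - R (pderiv (SL k) * ([:poly (W k) b:] - W k))"
    by (rule keyK[OF Wd])
  also have "\<dots> = (b - a) / (2 * real k + 1) - ((-(c0 * c1)) * (- ?Q - 0) + (- c0) * 0)"
    unfolding prod SL_norm Rerr_add Rerr_smult Rerr_diff r1 r2 r3 ..
  also have "\<dots> = (b - a) / (2 * real k + 1) - (c0 * c1) * ?Q" by simp
  also have "\<dots> = (2 * real k - 1) / (2 * real k + 1) * ((b - a) / (2 * real k - 1) - ?Q)"
    unfolding c0_def c1_def using ar_LL[OF ba, of "real k" ?Q] k1 by (simp add: of_nat_diff)
  finally show ?thesis using k1 by (simp add: of_nat_diff)
qed

end



context cellQ
begin

lemma cf_pos: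
  assumes ex: Ex2
    and c2: "(b - a) / real (2 * k - 1) - Qrule k s A (poly (SL (k + 1) * SL (k - 1))) > 0"
    and dp: "degree p \<le> k" and p0: "p \<noteq> 0"
  shows "cf p p > 0"
proof -
  define L where "L = SL k"
  define \<alpha> where "\<alpha> = coeff p k / coeff L k"
  define q where "q = p - smult \<alpha> L"
  have cL: "coeff L k \<noteq> 0" unfolding L_def by (rule SL_lead)
  have dL: "degree L = k" unfolding L_def by (rule SL_deg)
  have pq: "p = smult \<alpha> L + q" unfolding q_def by simp
  have dq0: "degree q \<le> Suc (k - 1)"
    unfolding q_def using degree_diff_le[of p k "smult \<alpha> L"] dp dL k1
    by (simp add: degree_smult_le order_trans[OF degree_smult_le])
  have cq: "coeff q (Suc (k - 1)) = 0"
    unfolding q_def using cL k1 by (simp add: \<alpha>_def)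
  have dq: "degree q \<le> k - 1" by (rule degree_drop[OF dq0 cq])
  have dqk: "degree q \<le> k" using dq by simp
  have LL: "cf L L > 0"
  proof -
    show ?thesis unfolding L_def cf_LL[OF ex] by (rule mult_pos_pos[OF _ c2]) (use k1 in simp)
  qed
  have qL: "cf q L = 0"
  proof -
    have i: "integral {a..b} (poly (q * L)) = 0"
      unfolding L_def mult.commute[of q] using k1 dq
      by (intro SL_orth) auto
    have "degree (pderiv L * Wv q) \<le> (k - 1) + Suc (k - 1)"
      using degree_mult_le[of "pderiv L" "Wv q"] dL Wv_deg[OF dq]
      by (simp add: degree_pderiv)
    then have "R (pderiv L * Wv q) = 0" using k1 by (intro Ex2D[OF ex]) simp
    then show ?thesis unfolding keyK' i by simp
  qed
  have Lq: "cf L q = 0" using cf_sym[OF ex _ dqk, of L] dL qL by simp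
  have qq: "cf q q = integral {a..b} (poly (q * q))"
  proof -
    have "degree (pderiv q * Wv q) \<le> (k - 1) + Suc (k - 1)"
      using degree_mult_le[of "pderiv q" "Wv q"] dq Wv_deg[OF dq]
      by (simp add: degree_pderiv)
    then have "R (pderiv q * Wv q) = 0" using k1 by (intro Ex2D[OF ex]) simp
    then show ?thesis unfolding keyK' by simp
  qed
  have "cf p p = \<alpha> * (\<alpha> * cf L L + cf q L) + (\<alpha> * cf L q + cf q q)"
    unfolding pq cfm_lin1 cfm_lin2 ..
  also have "\<dots> = \<alpha> * \<alpha> * cf L L + integral {a..b} (poly (q * q))"
    using qL Lq qq by simp
  finally have E: "cf p p = \<alpha> * \<alpha> * cf L L + integral {a..b} (poly (q * q))" .
  show ?thesis
  proof (cases "\<alpha> = 0")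
    case True
    then have "q = p" unfolding q_def by simp
    then show ?thesis using E True int_sq_pos[OF ab p0] by simp
  next
    case False
    have "integral {a..b} (poly (q * q)) \<ge> 0"
      using int_sq_pos[OF ab, of q] by (cases "q = 0") (auto simp: int_zero)
    moreover have "\<alpha> * \<alpha> * cf L L > 0"
    proof -
      have sq: "\<alpha> * \<alpha> > 0" using False by (metis not_real_square_gt_zero)
      show ?thesis by (rule mult_pos_pos[OF sq LL])
    qed
    ultimately show ?thesis using E by simp
  qed
qed

definition "yb = [: b, -1 :]"

lemma poly_yb: "poly yb x = b - x" by (simp add: yb_def)

lemma cf_y:
  "cf (yb ^ m) (yb ^ n) = integral {a..b} (poly (yb ^ m * yb ^ n)) + real n / (real m + 1) * R (yb ^ (m + n))"
proof -
  define V where "V = smult (-1 / (real m + 1)) (yb ^ Suc m)"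
  have py: "pderiv yb = [: -1 :]" by (simp add: yb_def pderiv_pCons)
  have Vd: "pderiv V = yb ^ m"
    unfolding V_def pderiv_smult pderiv_power_Suc py
    by (simp add: field_simps)
  have Vb: "poly V b = 0" by (simp add: V_def poly_yb)
  have P: "pderiv (yb ^ n) * ([:poly V b:] - V) = smult (- (real n / (real m + 1))) (yb ^ (m + n))"
  proof (cases n)
    case 0 then show ?thesis by simp
  next
    case (Suc n')
    have pn: "pderiv (yb ^ n) = smult (real (Suc n')) (yb ^ n') * [:-1:]"
      unfolding Suc pderiv_power_Suc py ..
    have "pderiv (yb ^ n) * ([:poly V b:] - V) = smult (real (Suc n')) (yb ^ n') * [:-1:] * (0 - V)"
      unfolding pn Vb by simp
    also have "\<dots> = smult (- (real n / (real m + 1))) (yb ^ (m + n))"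
      by (intro poly_ext) (simp add: Suc V_def poly_yb field_simps power_add)
    finally show ?thesis .
  qed
  show ?thesis unfolding keyK[OF Vd, of "yb ^ n"] P Rerr_smult by simp
qed

lemma sym_Ex2:
  assumes sym: "\<And>v w. degree v \<le> k \<Longrightarrow> degree w \<le> k \<Longrightarrow> cf v w = cf w v"
    and ex0: "\<And>p. degree p \<le> k - 1 \<Longrightarrow> R p = 0"
  shows Ex2
proof -
  have dy: "degree (yb ^ m) \<le> m" for m
    using degree_power_le[of yb m] by (simp add: yb_def)
  have Ry: "R (yb ^ d) = 0" if d: "d \<le> 2 * k - 1" for d
  proof (cases "d = 0")
    case True then show ?thesis using ex0[of 1] by simp
  next
    case False
    obtain m n where mn: "m + n = d" "m \<noteq> n" "m \<le> k" "n \<le> k"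
    proof (cases "d \<le> k")
      case True then show ?thesis using that[of 0 d] False by simp
    next
      case False then show ?thesis using that[of "d - k" k] d k1 by simp
    qed
    have "cf (yb ^ m) (yb ^ n) = cf (yb ^ n) (yb ^ m)"
      using sym[OF order_trans[OF dy mn(3)] order_trans[OF dy mn(4)]] .
    then have "integral {a..b} (poly (yb ^ m * yb ^ n)) + real n / (real m + 1) * R (yb ^ (m + n))
        = integral {a..b} (poly (yb ^ n * yb ^ m)) + real m / (real n + 1) * R (yb ^ (n + m))"
      unfolding cf_y .
    then have "(real n / (real m + 1) - real m / (real n + 1)) * R (yb ^ (m + n)) = 0"
      by (simp add: mult.commute add.commute algebra_simps)
    moreover have "real n / (real m + 1) - real m / (real n + 1) \<noteq> 0"
      using ar_ne[OF mn(2)] by simp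
    ultimately show ?thesis using mn(1) by simp
  qed
  show ?thesis unfolding Ex2_def
  proof (intro allI impI)
    fix p :: "real poly"
    assume dp: "degree p \<le> 2 * k - 1"
    define p' where "p' = pcompose p yb"
    have dp': "degree p' = degree p" by (simp add: p'_def degree_pcompose yb_def)
    have "p = (\<Sum>d\<le>degree p'. smult (coeff p' d) (yb ^ d))"
    proof (rule poly_ext)
      fix x
      have "poly p x = poly p' (b - x)" by (simp add: p'_def poly_pcompose poly_yb)
      also have "\<dots> = (\<Sum>d\<le>degree p'. coeff p' d * (b - x) ^ d)" by (rule poly_altdef)
      finally show "poly p x = poly (\<Sum>d\<le>degree p'. smult (coeff p' d) (yb ^ d)) x"
        by (simp add: poly_sum poly_yb)
    qed
    then have "R p = (\<Sum>d\<le>degree p'. R (smult (coeff p' d) (yb ^ d)))"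
      by (metis Rerr_sum finite_atMost)
    also have "\<dots> = 0"
      using dp dp' by (intro sum.neutral) (auto simp: Rerr_smult Ry)
    finally show "R p = 0" .
  qed
qed

end



lemma single_bform:
  assumes "i < N"
  shows "bform N k s A (\<lambda>j. if j = i then p else 0) (\<lambda>j. if j = i then q else 0) = cfm k (s i) (A i) p q"
proof -
  have "bform N k s A (\<lambda>j. if j = i then p else 0) (\<lambda>j. if j = i then q else 0)
      = (\<Sum>j<N. if j = i then cfm k (s i) (A i) p q else 0)"
    unfolding bform_cfm by (intro sum.cong refl) (auto simp: cfm_zero1)
  also have "\<dots> = cfm k (s i) (A i) p q" using assms by simp
  finally show ?thesis .
qed

lemma single_Vk: "i < N \<Longrightarrow> degree p \<le> k \<Longrightarrow> (\<lambda>j. if j = i then p else 0) \<in> Vk N k"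
  by (auto simp: Vk_def)

theorem theorem3p5:
  fixes N k :: nat and x :: "nat \<Rightarrow> real" and s A :: "nat \<Rightarrow> nat \<Rightarrow> real"
  assumes "k \<ge> 1" and "0 < N"
    and "\<forall>i<N. x i < x (Suc i)"
    and "\<forall>i<N. s i 0 = x i \<and> s i (k + 1) = x (Suc i)"
    and "\<forall>i<N. \<forall>j\<le>k. s i j < s i (Suc j)"
    and "\<forall>i<N. \<forall>p. degree p \<le> k - 1 \<longrightarrow> Rerr (x i) (x (Suc i)) k (s i) (A i) (poly p) = 0"
  shows "is_inner_product (Vk N k) (bform N k s A) \<longleftrightarrow>
    (\<forall>i<N. (\<forall>p. degree p \<le> 2 * k - 1 \<longrightarrow> Rerr (x i) (x (Suc i)) k (s i) (A i) (poly p) = 0) \<and>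
       (x (Suc i) - x i) / real (2 * k - 1)
         - Qrule k (s i) (A i) (poly (shifted_legendre (x i) (x (Suc i)) (k + 1)
                                      * shifted_legendre (x i) (x (Suc i)) (k - 1))) > 0)"
proof -
  have loc: "cellQ (x i) (x (Suc i)) k (s i)" if "i < N" for i
    using assms that by (unfold_locales) auto
  show ?thesis
  proof
    assume IP: "is_inner_product (Vk N k) (bform N k s A)"
    show "\<forall>i<N. (\<forall>p. degree p \<le> 2 * k - 1 \<longrightarrow> Rerr (x i) (x (Suc i)) k (s i) (A i) (poly p) = 0) \<and>
       (x (Suc i) - x i) / real (2 * k - 1)
         - Qrule k (s i) (A i) (poly (shifted_legendre (x i) (x (Suc i)) (k + 1)
                                      * shifted_legendre (x i) (x (Suc i)) (k - 1))) > 0"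
    proof (intro allI impI)
      fix i assume i: "i < N"
      interpret C: cellQ "x i" "x (Suc i)" k "s i" "A i" by (rule loc[OF i])
      have symc: "cfm k (s i) (A i) v w = cfm k (s i) (A i) w v" if "degree v \<le> k" "degree w \<le> k" for v w
      proof -
        have "bform N k s A (\<lambda>j. if j = i then v else 0) (\<lambda>j. if j = i then w else 0)
            = bform N k s A (\<lambda>j. if j = i then w else 0) (\<lambda>j. if j = i then v else 0)"
          using IP single_Vk[OF i that(1)] single_Vk[OF i that(2)] unfolding is_inner_product_def by blast
        then show ?thesis unfolding single_bform[OF i] .
      qed
      have ex0: "\<And>p. degree p \<le> k - 1 \<Longrightarrow> Rerr (x i) (x (Suc i)) k (s i) (A i) (poly p) = 0"
        using assms(6) i by blast
      have ex2: C.Ex2 by (rule C.sym_Ex2[OF symc ex0])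
      let ?L = "shifted_legendre (x i) (x (Suc i)) k"
      have Lne: "?L \<noteq> 0" using C.SL_lead[of k] by auto
      have "(\<lambda>j. if j = i then ?L else 0) \<noteq> (\<lambda>j. 0)"
        using Lne by (metis (mono_tags))
      then have "bform N k s A (\<lambda>j. if j = i then ?L else 0) (\<lambda>j. if j = i then ?L else 0) > 0"
        using IP single_Vk[OF i C.SL_deg[THEN eq_refl]] unfolding is_inner_product_def by blast
      then have "cfm k (s i) (A i) ?L ?L > 0" unfolding single_bform[OF i] .
      then have pos: "(2 * real k - 1) / (2 * real k + 1) *
          ((x (Suc i) - x i) / real (2 * k - 1) - Qrule k (s i) (A i) (poly (shifted_legendre (x i) (x (Suc i)) (k + 1)
                                      * shifted_legendre (x i) (x (Suc i)) (k - 1)))) > 0"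
        unfolding C.cf_LL[OF ex2] .
      have "(2 * real k - 1) / (2 * real k + 1) > 0" using assms(1) by simp
      then have c2: "(x (Suc i) - x i) / real (2 * k - 1) - Qrule k (s i) (A i) (poly (shifted_legendre (x i) (x (Suc i)) (k + 1)
                                      * shifted_legendre (x i) (x (Suc i)) (k - 1))) > 0"
        by (rule zero_less_mult_pos[OF pos])
      show "(\<forall>p. degree p \<le> 2 * k - 1 \<longrightarrow> Rerr (x i) (x (Suc i)) k (s i) (A i) (poly p) = 0) \<and>
       (x (Suc i) - x i) / real (2 * k - 1)
         - Qrule k (s i) (A i) (poly (shifted_legendre (x i) (x (Suc i)) (k + 1)
                                      * shifted_legendre (x i) (x (Suc i)) (k - 1))) > 0"
        using ex2 c2 unfolding C.Ex2_def by blast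
    qed
  next
    assume H: "\<forall>i<N. (\<forall>p. degree p \<le> 2 * k - 1 \<longrightarrow> Rerr (x i) (x (Suc i)) k (s i) (A i) (poly p) = 0) \<and>
       (x (Suc i) - x i) / real (2 * k - 1)
         - Qrule k (s i) (A i) (poly (shifted_legendre (x i) (x (Suc i)) (k + 1)
                                      * shifted_legendre (x i) (x (Suc i)) (k - 1))) > 0"
    have cellsym: "cfm k (s i) (A i) v w = cfm k (s i) (A i) w v"
      if i: "i < N" and "degree v \<le> k" "degree w \<le> k" for i v w
    proof -
      interpret C: cellQ "x i" "x (Suc i)" k "s i" "A i" by (rule loc[OF i])
      have ex2: C.Ex2 using H i unfolding C.Ex2_def by blast
      show ?thesis by (rule C.cf_sym[OF ex2 that(2,3)])
    qed
    have cellpos: "cfm k (s i) (A i) v v > 0"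
      if i: "i < N" and "degree v \<le> k" "v \<noteq> 0" for i v
    proof -
      interpret C: cellQ "x i" "x (Suc i)" k "s i" "A i" by (rule loc[OF i])
      have ex2: C.Ex2 using H i unfolding C.Ex2_def by blast
      have c2: "(x (Suc i) - x i) / real (2 * k - 1) - Qrule k (s i) (A i) (poly (shifted_legendre (x i) (x (Suc i)) (k + 1)
                                      * shifted_legendre (x i) (x (Suc i)) (k - 1))) > 0"
        using H i by blast
      show ?thesis by (rule C.cf_pos[OF ex2 c2 that(2,3)])
    qed
    show "is_inner_product (Vk N k) (bform N k s A)"
      unfolding is_inner_product_def
    proof (intro conjI ballI allI impI)
      fix u v w :: "nat \<Rightarrow> real poly" and c :: real
      show "bform N k s A (\<lambda>i. smult c (u i) + v i) w = c * bform N k s A u w + bform N k s A v w"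
        unfolding bform_cfm cfm_lin1 by (simp add: sum.distrib sum_distrib_left)
      show "bform N k s A w (\<lambda>i. smult c (u i) + v i) = c * bform N k s A w u + bform N k s A w v"
        unfolding bform_cfm cfm_lin2 by (simp add: sum.distrib sum_distrib_left)
    next
      fix v w assume v: "v \<in> Vk N k" and w: "w \<in> Vk N k"
      show "bform N k s A v w = bform N k s A w v"
        unfolding bform_cfm using v w by (intro sum.cong refl cellsym) (auto simp: Vk_def)
    next
      fix v assume v: "v \<in> Vk N k" and nz: "v \<noteq> (\<lambda>i. 0)"
      then obtain i where vi: "v i \<noteq> 0" by auto
      have i: "i < N" using v vi unfolding Vk_def by (metis (mono_tags, lifting) mem_Collect_eq not_less)
      have ge: "\<forall>j\<in>{..<N}. 0 \<le> cfm k (s j) (A j) (v j) (v j)"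
      proof
        fix j assume "j \<in> {..<N}"
        then have j: "j < N" by simp
        show "0 \<le> cfm k (s j) (A j) (v j) (v j)"
        proof (cases "v j = 0")
          case True then show ?thesis by (simp add: cfm_zero1)
        next
          case False then show ?thesis
            using cellpos[OF j _ False] v j by (auto simp: Vk_def intro: less_imp_le)
        qed
      qed
      have "0 < cfm k (s i) (A i) (v i) (v i)"
        using cellpos[OF i _ vi] v i by (auto simp: Vk_def)
      then show "0 < bform N k s A v v"
        unfolding bform_cfm using i ge by (intro sum_pos2[of "{..<N}" i]) auto
    qed
  qed
qed


end
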